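(* Let $A$ be a T-brace and suppose that the torsion subgroup of the additive group of $\zeta(\star,A)$ is a $p$-group for some prime $p$. Suppose that the additive group of $\zeta_2(\star,A)$ is not periodic. If $a,b\in\zeta_2(\star,A)$ with $a\star a\neq 0$ and $b\star b\neq 0$, then $\langle a\star a\rangle\cap\langle b\star b\rangle\neq 0$, and in this case $\langle a\star a\rangle=\langle b\star b\rangle$. Here $\langle x\rangle$ denotes the cyclic subgroup of $(A,+)$ generated by $x$.
   Context: A (left) brace is a set $A$ with two operations $+$ and $\cdot$ such that $(A,+)$ is an abelian group, $(A,\cdot)$ is a group, and $a(b+c)=ab+ac-a$ for all $a,b,c\in A$. Put $a\star b=ab-a-b$. A subbrace is a subset which is a subgroup of both $(A,+)$ and $(A,\cdot)$; a subbrace $L$ is an ideal if $a\star z, z\star a\in L$ for all $a\in A$, $z\in L$, and then the quotient brace $A/L$ is defined. $A$ is a T-brace if whenever $I$ is an ideal of $J$ and $J$ is an ideal of $A$, then $I$ is an ideal of $A$. The $\star$-center is $\zeta(\star,A)=\{a: a\star x=x\star a=0\ \forall x\}$; $\zeta_2(\star,A)$ is given by $\zeta_2(\star,A)/\zeta(\star,A)=\zeta(\star,A/\zeta(\star,A))$. *)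

theory Defs
  imports "HOL-Algebra.Algebra"
begin

record 'a brace =
  addg :: "'a monoid"
  mulg :: "'a monoid"

definition bcarrier :: "'a brace \<Rightarrow> 'a set" where
  "bcarrier A = carrier (addg A)"

definition bplus :: "'a brace \<Rightarrow> 'a \<Rightarrow> 'a \<Rightarrow> 'a" where
  "bplus A x y = x \<otimes>\<^bsub>addg A\<^esub> y"

definition btimes :: "'a brace \<Rightarrow> 'a \<Rightarrow> 'a \<Rightarrow> 'a" where
  "btimes A x y = x \<otimes>\<^bsub>mulg A\<^esub> y"

definition bneg :: "'a brace \<Rightarrow> 'a \<Rightarrow> 'a" where
  "bneg A x = inv\<^bsub>addg A\<^esub> x"

definition bzero :: "'a brace \<Rightarrow> 'a" where
  "bzero A = \<one>\<^bsub>addg A\<^esub>"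

definition is_brace :: "'a brace \<Rightarrow> bool" where
  "is_brace A \<longleftrightarrow> comm_group (addg A) \<and> group (mulg A)
     \<and> carrier (mulg A) = carrier (addg A)
     \<and> (\<forall>a\<in>bcarrier A. \<forall>b\<in>bcarrier A. \<forall>c\<in>bcarrier A.
          btimes A a (bplus A b c) = bplus A (bplus A (btimes A a b) (btimes A a c)) (bneg A a))"

definition bstar :: "'a brace \<Rightarrow> 'a \<Rightarrow> 'a \<Rightarrow> 'a" where
  "bstar A a b = bplus A (bplus A (btimes A a b) (bneg A a)) (bneg A b)"

definition subbrace :: "'a brace \<Rightarrow> 'a set \<Rightarrow> bool" where
  "subbrace A S \<longleftrightarrow> subgroup S (addg A) \<and> subgroup S (mulg A)"

definition ideal_in :: "'a brace \<Rightarrow> 'a set \<Rightarrow> 'a set \<Rightarrow> bool" where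
  "ideal_in A J L \<longleftrightarrow> subbrace A J \<and> subbrace A L \<and> L \<subseteq> J
     \<and> (\<forall>a\<in>J. \<forall>z\<in>L. bstar A a z \<in> L \<and> bstar A z a \<in> L)"

definition brace_ideal :: "'a brace \<Rightarrow> 'a set \<Rightarrow> bool" where
  "brace_ideal A L \<longleftrightarrow> ideal_in A (bcarrier A) L"

definition T_brace :: "'a brace \<Rightarrow> bool" where
  "T_brace A \<longleftrightarrow> is_brace A \<and>
     (\<forall>I J. brace_ideal A J \<and> ideal_in A J I \<longrightarrow> brace_ideal A I)"

definition star_center :: "'a brace \<Rightarrow> 'a set" where
  "star_center A = {a \<in> bcarrier A. \<forall>x\<in>bcarrier A.
       bstar A a x = bzero A \<and> bstar A x a = bzero A}"

text \<open>Quotient brace A/L: quotient of the additive and of the multiplicative group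
  by L (for an ideal L the additive and multiplicative cosets coincide).\<close>
definition quot_brace :: "'a brace \<Rightarrow> 'a set \<Rightarrow> 'a set brace" where
  "quot_brace A L = \<lparr> addg = addg A Mod L, mulg = mulg A Mod L \<rparr>"

definition star_center2 :: "'a brace \<Rightarrow> 'a set" where
  "star_center2 A = {a \<in> bcarrier A.
       r_coset (addg A) (star_center A) a \<in> star_center (quot_brace A (star_center A))}"

text \<open>additive order (0 = infinite order) and cyclic additive subgroup\<close>
definition add_ord :: "'a brace \<Rightarrow> 'a \<Rightarrow> nat" where
  "add_ord A x = group.ord (addg A) x"

definition add_cyclic :: "'a brace \<Rightarrow> 'a \<Rightarrow> 'a set" where
  "add_cyclic A x = generate (addg A) {x}"

end

theory Submission
  imports Defs
begin

lemma (in group) addmap_int_pow: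
  assumes H: "subgroup H G" and f: "\<And>a. a \<in> H \<Longrightarrow> f a \<in> carrier G"
    and add: "\<And>a b. a \<in> H \<Longrightarrow> b \<in> H \<Longrightarrow> f (a \<otimes> b) = f a \<otimes> f b" and x: "x \<in> H"
  shows "f (x [^] (n::int)) = f x [^] n"
proof -
  have gH: "group (G\<lparr>carrier := H\<rparr>)" using subgroup.subgroup_is_group[OF H is_group] .
  have "f \<in> hom (G\<lparr>carrier := H\<rparr>) G" by (rule homI) (auto simp: f add)
  then have "f (x [^]\<^bsub>G\<lparr>carrier := H\<rparr>\<^esub> n) = f x [^] n"
    using hom_int_pow[of f "G\<lparr>carrier := H\<rparr>" G x n] gH x is_group by simp
  then show ?thesis using int_pow_consistent[OF H x] by simp
qed

locale brc =
  fixes A :: "'a brace"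
  assumes br: "is_brace A"
begin

abbreviation "G \<equiv> addg A"
abbreviation "M \<equiv> mulg A"
abbreviation "C \<equiv> carrier (addg A)"
abbreviation pl where "pl x y \<equiv> x \<otimes>\<^bsub>addg A\<^esub> y"
abbreviation ng where "ng x \<equiv> inv\<^bsub>addg A\<^esub> x"
abbreviation tm where "tm x y \<equiv> x \<otimes>\<^bsub>mulg A\<^esub> y"
abbreviation z0 where "z0 \<equiv> \<one>\<^bsub>addg A\<^esub>"
abbreviation st where "st \<equiv> bstar A"
abbreviation pw where "pw x (n::int) \<equiv> x [^]\<^bsub>addg A\<^esub> n"

sublocale G: comm_group G using br unfolding is_brace_def by auto
sublocale M: group M using br unfolding is_brace_def by auto

lemma carrM[simp]: "carrier M = C" using br unfolding is_brace_def by auto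

lemma dist: "a \<in> C \<Longrightarrow> b \<in> C \<Longrightarrow> c \<in> C \<Longrightarrow>
  tm a (pl b c) = pl (pl (tm a b) (tm a c)) (ng a)"
  using br unfolding is_brace_def bcarrier_def btimes_def bplus_def bneg_def by auto

lemma one_eq[simp]: "\<one>\<^bsub>M\<^esub> = z0"
proof -
  have c: "\<one>\<^bsub>M\<^esub> \<in> C" using M.one_closed by simp
  have "z0 = pl z0 (ng \<one>\<^bsub>M\<^esub>)"
    using dist[OF c G.one_closed G.one_closed] by simp
  then have "ng \<one>\<^bsub>M\<^esub> = z0" using c by simp
  then show ?thesis using c by (metis G.inv_inv G.inv_one)
qed

lemma tm_closed[simp]: "a \<in> C \<Longrightarrow> b \<in> C \<Longrightarrow> tm a b \<in> C"
  using M.m_closed by simp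

lemma st_eq: "st a b = pl (pl (tm a b) (ng a)) (ng b)"
  unfolding bstar_def bplus_def btimes_def bneg_def by simp

lemma st_closed[simp]: "a \<in> C \<Longrightarrow> b \<in> C \<Longrightarrow> st a b \<in> C"
  unfolding st_eq by simp

lemma cancel1[simp]: "P \<in> C \<Longrightarrow> x \<in> C \<Longrightarrow> pl (pl P (ng x)) x = P"
  by (simp add: G.m_assoc)
lemma cancel2[simp]: "P \<in> C \<Longrightarrow> x \<in> C \<Longrightarrow> pl (pl P x) (ng x) = P"
  by (simp add: G.m_assoc)

lemma st_eq2: "a \<in> C \<Longrightarrow> b \<in> C \<Longrightarrow> st a b = pl (tm a b) (ng (pl a b))"
  unfolding st_eq by (simp add: G.m_assoc G.inv_mult)

lemma tm_st: "a \<in> C \<Longrightarrow> b \<in> C \<Longrightarrow> tm a b = pl (st a b) (pl a b)"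
  by (simp add: st_eq2)

lemma canc: "s \<in> C \<Longrightarrow> t \<in> C \<Longrightarrow> k \<in> C \<Longrightarrow> pl s k = pl t k \<Longrightarrow> s = t"
  by simp

lemma st_radd: assumes "x \<in> C" "u \<in> C" "v \<in> C"
  shows "st x (pl u v) = pl (st x u) (st x v)"
proof -
  have e: "tm x (pl u v) = pl (pl (tm x u) (tm x v)) (ng x)" using dist assms by simp
  have "pl (tm x (pl u v)) x = pl (tm x u) (tm x v)"
    using e assms by simp
  then have "pl (st x (pl u v)) (pl (pl x u) (pl v x)) = pl (pl (st x u) (st x v)) (pl (pl x u) (pl v x))"
    using assms by (simp add: tm_st G.m_ac)
  then show ?thesis using assms by simp
qed

lemma dist': "a \<in> C \<Longrightarrow> b \<in> C \<Longrightarrow> c \<in> C \<Longrightarrow>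
  pl (tm a (pl b c)) a = pl (tm a b) (tm a c)"
  by (simp add: dist)

lemma SPI: assumes "a \<in> C" "b \<in> C" "u \<in> C"
  shows "st (tm a b) u = pl (pl (st a (st b u)) (st a u)) (st b u)"
proof -
  have "pl (pl (tm (tm a b) u) a) a = pl (pl (tm a (tm b u)) a) a"
    using assms by (simp add: M.m_assoc)
  also have "\<dots> = pl (pl (tm a (pl (st b u) (pl b u))) a) a"
    using assms by (simp add: tm_st[of b u])
  also have "\<dots> = pl (pl (tm a (st b u)) (tm a (pl b u))) a"
    using assms by (simp add: dist')
  also have "\<dots> = pl (tm a (st b u)) (pl (tm a (pl b u)) a)"
    using assms by (simp add: G.m_assoc)
  also have "\<dots> = pl (tm a (st b u)) (pl (tm a b) (tm a u))"
    using assms by (simp add: dist')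
  finally have e: "pl (pl (tm (tm a b) u) a) a = pl (tm a (st b u)) (pl (tm a b) (tm a u))" .
  have "pl (st (tm a b) u) (pl (pl (tm a b) u) (pl a a)) =
        pl (pl (pl (st a (st b u)) (st a u)) (st b u)) (pl (pl (tm a b) u) (pl a a))"
    using e assms by (simp add: tm_st[of "tm a b" u] tm_st[of a "st b u"] tm_st[of a u] G.m_ac)
  then show ?thesis using assms by simp
qed

abbreviation "Z \<equiv> star_center A"
definition "Z2 = {x \<in> C. \<forall>y\<in>C. st x y \<in> Z \<and> st y x \<in> Z}"

lemma Z_iff: "z \<in> Z \<longleftrightarrow> z \<in> C \<and> (\<forall>x\<in>C. st z x = z0 \<and> st x z = z0)"
  unfolding star_center_def bcarrier_def bzero_def by simp

lemma ZC: "z \<in> Z \<Longrightarrow> z \<in> C" using Z_iff by blast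
lemma Zl[simp]: "z \<in> Z \<Longrightarrow> x \<in> C \<Longrightarrow> st z x = z0" using Z_iff by blast
lemma Zr[simp]: "z \<in> Z \<Longrightarrow> x \<in> C \<Longrightarrow> st x z = z0" using Z_iff by blast

lemma tm_Zl: "z \<in> Z \<Longrightarrow> y \<in> C \<Longrightarrow> tm z y = pl z y"
  using tm_st ZC by simp
lemma tm_Zr: "z \<in> Z \<Longrightarrow> y \<in> C \<Longrightarrow> tm y z = pl y z"
  using tm_st ZC by simp

lemma tm_one_l[simp]: "x \<in> C \<Longrightarrow> tm z0 x = x"
  by (metis M.l_one carrM one_eq)
lemma tm_one_r[simp]: "x \<in> C \<Longrightarrow> tm x z0 = x"
  by (metis M.r_one carrM one_eq)
lemma st_one_l[simp]: "x \<in> C \<Longrightarrow> st z0 x = z0"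
  unfolding st_eq by simp
lemma st_one_r[simp]: "x \<in> C \<Longrightarrow> st x z0 = z0"
  unfolding st_eq by simp

lemma st_rinv: "x \<in> C \<Longrightarrow> u \<in> C \<Longrightarrow> st x (ng u) = ng (st x u)"
proof -
  assume a: "x \<in> C" "u \<in> C"
  have "pl (st x u) (st x (ng u)) = z0" using st_radd[of x u "ng u"] a by simp
  then show ?thesis using a by (metis G.inv_closed G.inv_equality G.m_comm st_closed)
qed

lemma Z_sub: "subgroup Z G"
proof (rule G.subgroupI)
  show "Z \<subseteq> C" using ZC by blast
  show "Z \<noteq> {}" using Z_iff[of z0] by auto
next
  fix z assume z: "z \<in> Z"
  have zc: "z \<in> C" using ZC z by blast
  show "ng z \<in> Z" unfolding Z_iff
  proof (intro conjI ballI)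
    show "ng z \<in> C" using zc by simp
    fix x assume x: "x \<in> C"
    show "st x (ng z) = z0" using st_rinv[OF x zc] z x by simp
    have "tm z (ng z) = z0" using tm_Zl[OF z, of "ng z"] zc by simp
    then have "z0 = st (tm z (ng z)) x" using x by simp
    also have "\<dots> = st (ng z) x" using SPI[of z "ng z" x] z zc x by simp
    finally show "st (ng z) x = z0" by simp
  qed
next
  fix z w assume z: "z \<in> Z" and w: "w \<in> Z"
  have zc: "z \<in> C" "w \<in> C" using ZC z w by auto
  show "pl z w \<in> Z" unfolding Z_iff
  proof (intro conjI ballI)
    show "pl z w \<in> C" using zc by simp
    fix x assume x: "x \<in> C"
    show "st x (pl z w) = z0" using st_radd[OF x zc] z w x by simp
    have "st (pl z w) x = st (tm z w) x" using tm_Zl[OF z, of w] zc by simp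
    also have "\<dots> = z0" using SPI[of z w x] z w zc x by simp
    finally show "st (pl z w) x = z0" .
  qed
qed

lemma Zng: "z \<in> Z \<Longrightarrow> ng z \<in> Z" by (rule subgroup.m_inv_closed[OF Z_sub])
lemma Zpl: "z \<in> Z \<Longrightarrow> w \<in> Z \<Longrightarrow> pl z w \<in> Z" by (rule subgroup.m_closed[OF Z_sub])
lemma Zpw: "z \<in> Z \<Longrightarrow> pw z n \<in> Z" by (rule G.subgroup_int_pow_closed[OF Z_sub])
lemma Zone[simp]: "z0 \<in> Z" by (rule subgroup.one_closed[OF Z_sub])

lemma GL: assumes x: "x \<in> C" and y: "y \<in> C" and u: "u \<in> C" and w: "st x y \<in> Z"
  shows "st (pl x y) u = pl (pl (st x (st y u)) (st x u)) (st y u)"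
proof -
  define w where "w = st x y"
  have wZ: "w \<in> Z" "ng w \<in> Z" using w Zng unfolding w_def by auto
  have wc: "w \<in> C" "ng w \<in> C" using wZ ZC by auto
  define c where "c = pl (ng w) y"
  have cc: "c \<in> C" unfolding c_def using wc y by simp
  have "st x c = w" unfolding c_def using st_radd[OF x wc(2) y] wZ x y unfolding w_def by simp
  then have "tm x c = pl w (pl x (pl (ng w) y))" using tm_st[OF x cc] unfolding c_def by simp
  also have "\<dots> = pl x (pl w (pl (ng w) y))" using wc x y G.m_lcomm by simp
  also have "\<dots> = pl x y" using wc x y by (simp add: G.m_assoc[symmetric])
  finally have xc: "tm x c = pl x y" .
  have "st c u = st (tm (ng w) y) u" unfolding c_def using tm_Zl[OF wZ(2) y] by simp
  also have "\<dots> = st y u" using SPI[OF wc(2) y u] wZ y u by simp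
  finally have cu: "st c u = st y u" .
  show ?thesis using SPI[OF x cc u] xc cu by simp
qed

lemma Z2C: "x \<in> Z2 \<Longrightarrow> x \<in> C" unfolding Z2_def by auto
lemma Z2l: "x \<in> Z2 \<Longrightarrow> u \<in> C \<Longrightarrow> st x u \<in> Z" unfolding Z2_def by auto
lemma Z2r: "x \<in> Z2 \<Longrightarrow> u \<in> C \<Longrightarrow> st u x \<in> Z" unfolding Z2_def by auto
lemma Z_Z2: "z \<in> Z \<Longrightarrow> z \<in> Z2" unfolding Z2_def using ZC by auto

lemma Z2_ladd: assumes "x \<in> Z2" "y \<in> Z2" "u \<in> C"
  shows "st (pl x y) u = pl (st x u) (st y u)"
  using GL[of x y u] assms Z2C Z2l by simp

lemma Z2_lneg: assumes x: "x \<in> Z2" and u: "u \<in> C"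
  shows "st (ng x) u = ng (st x u)"
proof -
  have xc: "x \<in> C" using Z2C x by blast
  define s where "s = st (ng x) u"
  have sc: "s \<in> C" unfolding s_def using xc u by simp
  have xu: "st x u \<in> Z" "st x u \<in> C" using Z2l x u ZC by auto
  define t where "t = ng (st x u)"
  have tZ: "t \<in> Z" "t \<in> C" unfolding t_def using Zng xu ZC by auto
  have g: "st (pl x (ng x)) u = pl (pl (st x s) (st x u)) s" unfolding s_def
    using GL[OF xc G.inv_closed[OF xc] u Z2l[OF x G.inv_closed[OF xc]]] .
  have e: "z0 = pl (pl (st x s) (st x u)) s" using g xc u by simp
  have "pl (pl (st x s) s) (st x u) = z0" using e xc sc xu by (simp add: G.m_ac)
  then have e2: "pl (st x s) s = t" unfolding t_def
    using xc sc xu by (simp add: G.inv_equality)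
  have "tm x s = pl (pl (st x s) s) x" using tm_st[OF xc sc] xc sc by (simp add: G.m_ac)
  also have "\<dots> = pl (pl (st x t) t) x" using e2 tZ xc by simp
  also have "\<dots> = tm x t" using tm_st[OF xc tZ(2)] xc tZ by (simp add: G.m_ac)
  finally have "tm x s = tm x t" .
  then have "s = t" using xc sc tZ M.l_cancel[of x s t] by simp
  then show ?thesis unfolding s_def t_def .
qed

lemma Z2_sub: "subgroup Z2 G"
proof (rule G.subgroupI)
  show "Z2 \<subseteq> C" using Z2C by blast
  show "Z2 \<noteq> {}" using Z_Z2 Zone by blast
next
  fix x assume x: "x \<in> Z2"
  have xc: "x \<in> C" using Z2C x by blast
  show "ng x \<in> Z2" unfolding Z2_def
    using xc Z2_lneg[OF x] st_rinv[OF _ xc] Z2l[OF x] Z2r[OF x] Zng by auto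
next
  fix x y assume x: "x \<in> Z2" and y: "y \<in> Z2"
  have xc: "x \<in> C" "y \<in> C" using Z2C x y by auto
  show "pl x y \<in> Z2" unfolding Z2_def
    using xc Z2_ladd[OF x y] st_radd[OF _ xc] Z2l x y Z2r Zpl by auto
qed

lemma Z2pl: "x \<in> Z2 \<Longrightarrow> y \<in> Z2 \<Longrightarrow> pl x y \<in> Z2" by (rule subgroup.m_closed[OF Z2_sub])
lemma Z2ng: "x \<in> Z2 \<Longrightarrow> ng x \<in> Z2" by (rule subgroup.m_inv_closed[OF Z2_sub])
lemma Z2pw: "x \<in> Z2 \<Longrightarrow> pw x n \<in> Z2" by (rule G.subgroup_int_pow_closed[OF Z2_sub])

lemma st_rpow: "y \<in> C \<Longrightarrow> x \<in> C \<Longrightarrow> st y (pw x n) = pw (st y x) n"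
  using G.addmap_int_pow[OF G.subgroup_self, of "st y" x n] st_radd by simp

lemma st_lpow: "x \<in> Z2 \<Longrightarrow> y \<in> C \<Longrightarrow> st (pw x n) y = pw (st x y) n"
  using G.addmap_int_pow[OF Z2_sub, of "\<lambda>x. st x y" x n] Z2_ladd Z2C by simp

lemma Znormal: "Z \<lhd> G" using G.subgroup_imp_normal[OF Z_sub] .

lemma setmultM: assumes u: "u \<in> C" and v: "v \<in> C"
  shows "set_mult M (r_coset G Z u) (r_coset G Z v) = r_coset G Z (tm u v)"
proof
  show "set_mult M (r_coset G Z u) (r_coset G Z v) \<subseteq> r_coset G Z (tm u v)"
  proof
    fix t assume "t \<in> set_mult M (r_coset G Z u) (r_coset G Z v)"
    then obtain z z' where z: "z \<in> Z" and z': "z' \<in> Z" and t: "t = tm (pl z u) (pl z' v)"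
      unfolding set_mult_def r_coset_def by auto
    have zc: "z \<in> C" "z' \<in> C" using z z' ZC by auto
    have tvc: "tm u v \<in> C" using u v by simp
    have s1: "t = tm (tm z u) (tm z' v)" by (simp only: t tm_Zl[OF z u] tm_Zl[OF z' v])
    have s2: "tm z' v = tm v z'" by (simp only: tm_Zl[OF z' v] tm_Zr[OF z' v] G.m_comm[OF zc(2) v])
    have s3: "tm (tm z u) (tm v z') = tm z (tm (tm u v) z')" using zc u v by (simp add: M.m_assoc)
    have s4: "tm z (tm (tm u v) z') = pl z (pl (tm u v) z')"
      by (simp only: tm_Zr[OF z' tvc] tm_Zl[OF z G.m_closed[OF tvc zc(2)]])
    have s5: "pl z (pl (tm u v) z') = pl (pl z z') (tm u v)" using zc tvc by (simp add: G.m_ac)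
    have "t = pl (pl z z') (tm u v)" using s1 s2 s3 s4 s5 by simp
    then show "t \<in> r_coset G Z (tm u v)" unfolding r_coset_def using Zpl[OF z z'] by auto
  qed
next
  show "r_coset G Z (tm u v) \<subseteq> set_mult M (r_coset G Z u) (r_coset G Z v)"
  proof
    fix t assume "t \<in> r_coset G Z (tm u v)"
    then obtain z where z: "z \<in> Z" and t: "t = pl z (tm u v)" unfolding r_coset_def by auto
    have zc: "z \<in> C" using z ZC by auto
    have "tm (pl z u) (pl z0 v) = tm (tm z u) v" by (simp only: G.l_one[OF v] tm_Zl[OF z u])
    also have "\<dots> = tm z (tm u v)" using zc u v M.m_assoc[of z u v] by simp
    also have "\<dots> = t" by (simp only: tm_Zl[OF z tm_closed[OF u v]] t)
    finally have "t = tm (pl z u) (pl z0 v)" by (rule sym)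
    moreover have "pl z u \<in> r_coset G Z u" using G.rcosI[OF z _ u] ZC by blast
    moreover have "pl z0 v \<in> r_coset G Z v" using G.rcosI[OF Zone _ v] ZC by blast
    ultimately show "t \<in> set_mult M (r_coset G Z u) (r_coset G Z v)"
      unfolding set_mult_def by blast
  qed
qed

lemma bstarQ: assumes u: "u \<in> C" and v: "v \<in> C"
  shows "bstar (quot_brace A Z) (r_coset G Z u) (r_coset G Z v) = r_coset G Z (st u v)"
proof -
  have inv: "inv\<^bsub>G Mod Z\<^esub> (r_coset G Z x) = r_coset G Z (ng x)" if "x \<in> C" for x
  proof -
    have "r_coset G Z x \<in> carrier (G Mod Z)" unfolding FactGroup_def
      using G.rcosetsI[OF _ that] ZC by auto
    then show ?thesis using normal.inv_FactGroup[OF Znormal] normal.rcos_inv[OF Znormal that] by simp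
  qed
  show ?thesis
    unfolding bstar_def bplus_def btimes_def bneg_def quot_brace_def
    using u v by (simp add: setmultM inv normal.rcos_sum[OF Znormal] st_eq)
qed

lemma Z2_char: assumes "a \<in> star_center2 A" shows "a \<in> Z2"
proof -
  have a: "a \<in> C" and sc: "r_coset G Z a \<in> star_center (quot_brace A Z)"
    using assms unfolding star_center2_def bcarrier_def by auto
  have bz: "bzero (quot_brace A Z) = Z" unfolding bzero_def quot_brace_def by simp
  have mem: "r_coset G Z y \<in> bcarrier (quot_brace A Z)" if "y \<in> C" for y
    unfolding bcarrier_def quot_brace_def FactGroup_def using G.rcosetsI[OF _ that] ZC by auto
  have key: "w \<in> Z" if "w \<in> C" "r_coset G Z w = Z" for w
    using G.rcos_self[OF that(1) Z_sub] that(2) by simp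
  show ?thesis unfolding Z2_def
  proof (intro CollectI conjI ballI a)
    fix y assume y: "y \<in> C"
    have "bstar (quot_brace A Z) (r_coset G Z a) (r_coset G Z y) = Z"
      "bstar (quot_brace A Z) (r_coset G Z y) (r_coset G Z a) = Z"
      using sc mem[OF y] bz unfolding star_center_def by auto
    then show "st a y \<in> Z" "st y a \<in> Z" using bstarQ a y key by auto
  qed
qed

lemma ideal_lemma:
  assumes J: "subgroup J G" "subgroup J M" and I: "subgroup I G" "I \<subseteq> J"
    and cl: "\<And>j i. j \<in> J \<Longrightarrow> i \<in> I \<Longrightarrow> st j i \<in> I \<and> st i j \<in> I"
  shows "ideal_in A J I"
proof -
  have IC: "I \<subseteq> C" using I subgroup.subset by blast
  have JC: "J \<subseteq> C" using J subgroup.subset by blast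
  have "subgroup I M"
  proof (rule M.subgroupI)
    show "I \<subseteq> carrier M" using IC by simp
    show "I \<noteq> {}" using subgroup.one_closed[OF I(1)] by blast
  next
    fix a b assume a: "a \<in> I" and b: "b \<in> I"
    have ac: "a \<in> C" "b \<in> C" using a b IC by auto
    have "st a b \<in> I" using cl[of a b] a b I(2) by auto
    then show "tm a b \<in> I" using tm_st[OF ac] subgroup.m_closed[OF I(1)] a b by simp
  next
    fix a assume a: "a \<in> I"
    have ac: "a \<in> C" using a IC by auto
    define b where "b = inv\<^bsub>M\<^esub> a"
    have bJ: "b \<in> J" unfolding b_def using subgroup.m_inv_closed[OF J(2)] a I(2) by blast
    have bc: "b \<in> C" using bJ JC by auto
    have sI: "st a b \<in> I" using cl[OF bJ a] by simp
    have sc: "st a b \<in> C" using sI IC by auto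
    have "tm a b = z0" unfolding b_def using ac M.r_inv[of a] by simp
    then have "pl b (pl (st a b) a) = z0" using tm_st[OF ac bc] ac bc sc by (simp add: G.m_ac)
    then have "ng (pl (st a b) a) = b" using G.inv_equality[of b "pl (st a b) a"] ac bc sc by simp
    moreover have "ng (pl (st a b) a) \<in> I"
      using subgroup.m_inv_closed[OF I(1)] subgroup.m_closed[OF I(1)] sI a by blast
    ultimately show "inv\<^bsub>M\<^esub> a \<in> I" unfolding b_def by simp
  qed
  then show ?thesis unfolding ideal_in_def subbrace_def using assms by blast
qed

lemma brace_ideal_lemma:
  assumes J: "subgroup J G" "J \<subseteq> C"
    and cl: "\<And>y j. y \<in> C \<Longrightarrow> j \<in> J \<Longrightarrow> st y j \<in> J \<and> st j y \<in> J"
  shows "brace_ideal A J"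
  unfolding brace_ideal_def bcarrier_def
  by (rule ideal_lemma) (use assms G.subgroup_self M.subgroup_self in auto)

lemma span_sub: assumes "a \<in> C" "b \<in> C"
  shows "subgroup {pl (pw a n) (pw b m) | n m. True} G"
proof (rule G.subgroupI)
  show "{pl (pw a n) (pw b m) | n m. True} \<subseteq> C" using assms by auto
  show "{pl (pw a n) (pw b m) | n m. True} \<noteq> {}" by blast
next
  fix t assume "t \<in> {pl (pw a n) (pw b m) | n m. True}"
  then obtain n m where t: "t = pl (pw a n) (pw b m)" by blast
  have "ng t = pl (pw a (-n)) (pw b (-m))" using t assms by (simp add: G.inv_mult G.int_pow_neg)
  then show "ng t \<in> {pl (pw a n) (pw b m) | n m. True}" by blast
next
  fix t s assume "t \<in> {pl (pw a n) (pw b m) | n m. True}" "s \<in> {pl (pw a n) (pw b m) | n m. True}"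
  then obtain n m n' m' where t: "t = pl (pw a n) (pw b m)" and s: "s = pl (pw a n') (pw b m')" by blast
  have "pl t s = pl (pw a (n + n')) (pw b (m + m'))" using t s assms by (simp add: G.int_pow_mult G.m_ac)
  then show "pl t s \<in> {pl (pw a n) (pw b m) | n m. True}" by blast
qed

definition "JJ x = {pl z (pw x n) | z n. z \<in> Z}"

lemma JJ_sub: assumes "x \<in> C" shows "subgroup (JJ x) G"
proof (rule G.subgroupI)
  show "JJ x \<subseteq> C" unfolding JJ_def using assms ZC by auto
  show "JJ x \<noteq> {}" unfolding JJ_def using Zone by blast
next
  fix t assume "t \<in> JJ x"
  then obtain z n where z: "z \<in> Z" and t: "t = pl z (pw x n)" unfolding JJ_def by blast
  have "ng t = pl (ng z) (pw x (-n))" using t assms ZC[OF z] by (simp add: G.inv_mult G.int_pow_neg)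
  then show "ng t \<in> JJ x" unfolding JJ_def using Zng[OF z] by blast
next
  fix t s assume "t \<in> JJ x" "s \<in> JJ x"
  then obtain z n z' n' where z: "z \<in> Z" "z' \<in> Z" and t: "t = pl z (pw x n)" and s: "s = pl z' (pw x n')"
    unfolding JJ_def by blast
  have "pl t s = pl (pl z z') (pw x (n + n'))" using t s assms ZC z by (simp add: G.int_pow_mult G.m_ac)
  then show "pl t s \<in> JJ x" unfolding JJ_def using Zpl[OF z] by blast
qed

lemma JJ_Z2: "x \<in> Z2 \<Longrightarrow> JJ x \<subseteq> Z2"
  unfolding JJ_def using Z_Z2 Z2pw Z2pl by blast

lemma JJ_ideal: assumes x: "x \<in> Z2" shows "brace_ideal A (JJ x)"
proof (rule brace_ideal_lemma)
  have xc: "x \<in> C" using x Z2C by blast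
  show "subgroup (JJ x) G" using JJ_sub[OF xc] .
  show "JJ x \<subseteq> C" using JJ_Z2[OF x] Z2C by blast
  fix y j assume y: "y \<in> C" and j: "j \<in> JJ x"
  have jZ: "j \<in> Z2" using JJ_Z2[OF x] j by blast
  have "st y j \<in> Z" "st j y \<in> Z" using Z2l[OF jZ y] Z2r[OF jZ y] by auto
  moreover have "Z \<subseteq> JJ x" unfolding JJ_def
  proof
    fix z assume "z \<in> Z" then have "z = pl z (pw x 0)" using ZC by simp
    then show "z \<in> {pl z (pw x n) | z n. z \<in> Z}" using \<open>z \<in> Z\<close> by blast
  qed
  ultimately show "st y j \<in> JJ x \<and> st j y \<in> JJ x" by blast
qed

lemma Z2_lpw: "x \<in> Z2 \<Longrightarrow> y \<in> C \<Longrightarrow> st x y = a \<Longrightarrow> st (pw x n) y = pw a n"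
  using st_lpow by blast

lemma GD:
  assumes T: "T_brace A" and x: "x \<in> Z2" and w: "w \<in> Z" and y: "y \<in> C"
  shows "\<exists>n m. st y x = pl (pw (pl x w) n) (pw (st x x) m)"
    and "\<exists>n m. st x y = pl (pw (pl x w) n) (pw (st x x) m)"
proof -
  define d where "d = st x x"
  have xc: "x \<in> C" using x Z2C by blast
  have wc: "w \<in> C" "w \<in> Z2" using w ZC Z_Z2 by auto
  have dZ: "d \<in> Z" "d \<in> C" "d \<in> Z2" unfolding d_def using Z2l[OF x xc] ZC Z_Z2 by auto
  have xw: "pl x w \<in> Z2" "pl x w \<in> C" using Z2pl[OF x wc(2)] Z2C by auto
  define I where "I = {pl (pw (pl x w) n) (pw d m) | n m. True}"
  have Isub: "subgroup I G" unfolding I_def using span_sub[OF xw(2) dZ(2)] .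
  have IJ: "I \<subseteq> JJ x"
  proof
    fix i assume "i \<in> I"
    then obtain n m where i: "i = pl (pw (pl x w) n) (pw d m)" unfolding I_def by blast
    have "i = pl (pl (pw w n) (pw d m)) (pw x n)" using i xc wc dZ by (simp add: G.int_pow_distrib G.m_ac)
    moreover have "pl (pw w n) (pw d m) \<in> Z" using Zpl Zpw w dZ by blast
    ultimately show "i \<in> JJ x" unfolding JJ_def by blast
  qed
  have jx: "st j x = pw d n' \<and> st x j = pw d n'" if "j = pl z (pw x n')" "z \<in> Z" for j z n'
  proof -
    have zc: "z \<in> C" "z \<in> Z2" using that ZC Z_Z2 by auto
    have "st j x = pl (st z x) (st (pw x n') x)" using that Z2_ladd[OF zc(2) Z2pw[OF x] xc] by simp
    also have "\<dots> = pw d n'" using that xc st_lpow[OF x xc] unfolding d_def by simp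
    finally have 1: "st j x = pw d n'" .
    have "st x j = pl (st x z) (st x (pw x n'))" using that st_radd xc zc by simp
    also have "\<dots> = pw d n'" using that xc st_rpow[OF xc xc] unfolding d_def by simp
    finally show ?thesis using 1 by simp
  qed
  have cl: "st j i \<in> I \<and> st i j \<in> I" if j: "j \<in> JJ x" and i: "i \<in> I" for j i
  proof -
    obtain z n' where z: "z \<in> Z" and jd: "j = pl z (pw x n')" using j unfolding JJ_def by blast
    obtain n m where id: "i = pl (pw (pl x w) n) (pw d m)" using i unfolding I_def by blast
    have jc: "j \<in> C" "j \<in> Z2" using j JJ_Z2[OF x] Z2C by auto
    have "st j i = pl (pw (st j (pl x w)) n) (pw (st j d) m)"
      using id st_radd[OF jc(1)] st_rpow[OF jc(1)] xw dZ by simp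
    also have "\<dots> = pw (st j x) n" using st_radd[OF jc(1) xc wc(1)] w dZ jc xc by simp
    also have "\<dots> = pw d (n' * n)" using jx[OF jd z] dZ by (simp add: G.int_pow_pow)
    finally have 1: "st j i = pl (pw (pl x w) 0) (pw d (n' * n))" using dZ by simp
    have "st i j = pl (st (pw (pl x w) n) j) (st (pw d m) j)"
      using id Z2_ladd[OF Z2pw[OF xw(1)] Z2pw[OF dZ(3)] jc(1)] by simp
    also have "\<dots> = pw (st (pl x w) j) n" using st_lpow[OF xw(1) jc(1)] st_lpow[OF dZ(3) jc(1)] dZ jc xw by simp
    also have "\<dots> = pw (st x j) n" using Z2_ladd[OF x wc(2) jc(1)] w jc xc by simp
    also have "\<dots> = pw d (n' * n)" using jx[OF jd z] dZ by (simp add: G.int_pow_pow)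
    finally have 2: "st i j = pl (pw (pl x w) 0) (pw d (n' * n))" using dZ by simp
    show ?thesis using 1 2 unfolding I_def by blast
  qed
  have JM: "subgroup (JJ x) M" using JJ_ideal[OF x] unfolding brace_ideal_def ideal_in_def subbrace_def by blast
  have "ideal_in A (JJ x) I" using ideal_lemma[OF JJ_sub[OF xc] JM Isub IJ] cl by blast
  then have BI: "brace_ideal A I" using T JJ_ideal[OF x] unfolding T_brace_def by blast
  have "pl x w = pl (pw (pl x w) 1) (pw d 0)" using xw dZ by simp
  then have xwI: "pl x w \<in> I" unfolding I_def by blast
  have "st y (pl x w) \<in> I" "st (pl x w) y \<in> I"
    using BI xwI y unfolding brace_ideal_def ideal_in_def bcarrier_def by auto
  moreover have "st y (pl x w) = st y x" using st_radd[OF y xc wc(1)] w y xc by simp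
  moreover have "st (pl x w) y = st x y" using Z2_ladd[OF x wc(2) y] w y xc by simp
  ultimately show "\<exists>n m. st y x = pl (pw (pl x w) n) (pw (st x x) m)"
    and "\<exists>n m. st x y = pl (pw (pl x w) n) (pw (st x x) m)" unfolding I_def d_def by auto
qed

abbreviation "cyc u \<equiv> generate G {u}"

lemma cyc_mem: "u \<in> C \<Longrightarrow> t \<in> cyc u \<longleftrightarrow> (\<exists>k. t = pw u k)"
  using G.generate_pow[of u] by auto

lemma cyc_sub: "u \<in> C \<Longrightarrow> subgroup (cyc u) G"
  using G.generate_is_subgroup[of "{u}"] by simp

lemma cyc_self: "u \<in> C \<Longrightarrow> u \<in> cyc u"
  using cyc_mem[of u u] G.int_pow_1[of u] by metis

lemma cyc_one: "u \<in> C \<Longrightarrow> z0 \<in> cyc u"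
  using cyc_sub subgroup.one_closed by blast

lemma L1: assumes pr: "Factorial_Ring.prime (p::nat)" and u: "u \<in> cyc w" and w: "w \<in> C" and un: "u \<noteq> z0"
  and wp: "pw w (int p) = z0"
  shows "cyc u = cyc w"
proof -
  obtain j where j: "u = pw w j" using u cyc_mem[OF w] by blast
  have uc: "u \<in> C" using j w by simp
  have nd: "\<not> int p dvd j"
  proof
    assume "int p dvd j" then obtain t where "j = int p * t" by blast
    then have "u = pw (pw w (int p)) t" using j w G.int_pow_pow by simp
    then show False using un wp by simp
  qed
  have pi: "Factorial_Ring.prime (int p)" using pr by (simp add: prime_int_nat_transfer)
  have "coprime (int p) j" using nd pi by (simp add: prime_imp_coprime)
  then have g1: "gcd (int p) j = 1" by simp
  obtain u' v' where "u' * int p + v' * j = gcd (int p) j" using bezout_int by blast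
  then have uv: "u' * int p + v' * j = 1" using g1 by simp
  define i where "i = v'"
  define t where "t = - u'"
  have it: "i * j = 1 + int p * t" unfolding i_def t_def using uv by (simp add: algebra_simps)
  have "pw u i = pw w (j * i)" using j w G.int_pow_pow by simp
  also have "\<dots> = pl (pw w 1) (pw (pw w (int p)) t)" using it w
    by (simp add: G.int_pow_mult G.int_pow_pow mult.commute)
  also have "\<dots> = w" using wp w by simp
  finally have wu: "w = pw u i" by simp
  show ?thesis
  proof
    show "cyc u \<subseteq> cyc w"
    proof
      fix t assume "t \<in> cyc u"
      then obtain k where "t = pw u k" using cyc_mem[OF uc] by blast
      then have "t = pw w (j * k)" using j w G.int_pow_pow by simp
      then show "t \<in> cyc w" using cyc_mem[OF w] by blast
    qed
    show "cyc w \<subseteq> cyc u"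
    proof
      fix t assume "t \<in> cyc w"
      then obtain k where "t = pw w k" using cyc_mem[OF w] by blast
      then have "t = pw u (i * k)" using wu uc G.int_pow_pow by simp
      then show "t \<in> cyc u" using cyc_mem[OF uc] by blast
    qed
  qed
qed

abbreviation q where "q x \<equiv> st x x"

definition "Good x \<longleftrightarrow> (\<forall>y\<in>C. st y x \<in> cyc (q x) \<and> st x y \<in> cyc (q x))"

definition "S = {x \<in> Z2. \<forall>n. pw x n \<in> Z \<longrightarrow> n = 0}"

lemma Zcanc: "a \<in> Z \<Longrightarrow> b \<in> C \<Longrightarrow> pl a b \<in> Z \<Longrightarrow> b \<in> Z"
proof -
  assume a: "a \<in> Z" "b \<in> C" "pl a b \<in> Z"
  have "b = pl (ng a) (pl a b)" using a ZC by (simp add: G.m_assoc[symmetric])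
  then show ?thesis using Zpl[OF Zng[OF a(1)] a(3)] by simp
qed

lemma Zcanc2: "a \<in> C \<Longrightarrow> b \<in> Z \<Longrightarrow> pl a b \<in> Z \<Longrightarrow> a \<in> Z"
proof -
  assume a: "a \<in> C" "b \<in> Z" "pl a b \<in> Z"
  have "pl b a = pl a b" using a ZC G.m_comm by blast
  then show ?thesis using Zcanc[of b a] a by simp
qed

lemma E: assumes x: "x \<in> Z2" and w: "w \<in> Z" and s: "s \<in> Z"
  and sd: "s = pl (pw (pl x w) n) (pw (q x) m)"
  and sn: "pw x n \<in> Z \<Longrightarrow> pw s n = z0"
  shows "pw (pl x w) (n * n) = z0 \<and> pw x n \<in> Z"
proof -
  have xc: "x \<in> C" using x Z2C by blast
  have wc: "w \<in> C" using w ZC by blast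
  have dZ: "q x \<in> Z" using Z2l[OF x xc] .
  have dc: "q x \<in> C" using dZ ZC by blast
  have "pl (pw (pl x w) n) (pw (q x) m) \<in> Z" using s sd by simp
  then have "pw (pl x w) n \<in> Z" using Zcanc2[of "pw (pl x w) n" "pw (q x) m"] Zpw[OF dZ] xc wc by simp
  then have "pl (pw x n) (pw w n) \<in> Z" using xc wc by (simp add: G.int_pow_distrib)
  then have xn: "pw x n \<in> Z" using Zcanc2[of "pw x n" "pw w n"] Zpw[OF w] xc by simp
  have dn: "pw (q x) n = z0" using st_rpow[OF xc xc, of n] xn xc ZC by (metis Zr)
  have "pw (pw (pl x w) n) n = pw (pl s (ng (pw (q x) m))) n"
    using sd xc wc dc by (simp add: G.m_assoc)
  also have "\<dots> = pl (pw s n) (ng (pw (pw (q x) n) m))"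
    using s ZC dc by (simp add: G.int_pow_distrib G.int_pow_inv G.int_pow_pow mult.commute)
  also have "\<dots> = z0" using sn[OF xn] dn by simp
  finally show ?thesis using xn xc wc by (simp add: G.int_pow_pow)
qed

lemma Good_S: assumes T: "T_brace A" and x: "x \<in> S" shows "Good x"
  unfolding Good_def
proof (intro ballI conjI)
  fix y assume y: "y \<in> C"
  have xZ: "x \<in> Z2" and xs: "\<And>n. pw x n \<in> Z \<Longrightarrow> n = 0" using x unfolding S_def by auto
  have xc: "x \<in> C" using xZ Z2C by blast
  have dZ: "q x \<in> Z" "q x \<in> C" using Z2l[OF xZ xc] ZC by auto
  have gen: "s \<in> cyc (q x)" if "s \<in> Z" "s = pl (pw (pl x z0) n) (pw (q x) m)" for s n m
  proof -
    have "pl (pw x n) (pw (q x) m) \<in> Z" using that xc by simp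
    then have "pw x n \<in> Z" using Zcanc2[of "pw x n" "pw (q x) m"] Zpw[OF dZ(1)] xc by simp
    then have "n = 0" using xs by blast
    then have "s = pw (q x) m" using that xc dZ by simp
    then show ?thesis using cyc_mem[OF dZ(2)] by blast
  qed
  obtain n m where "st y x = pl (pw (pl x z0) n) (pw (q x) m)" using GD(1)[OF T xZ Zone y] by blast
  then show "st y x \<in> cyc (q x)" using gen Z2r[OF xZ y] by blast
  obtain n m where "st x y = pl (pw (pl x z0) n) (pw (q x) m)" using GD(2)[OF T xZ Zone y] by blast
  then show "st x y \<in> cyc (q x)" using gen Z2l[OF xZ y] by blast
qed

lemma Good_A: assumes T: "T_brace A" and x: "x \<in> Z2" and v: "v \<in> Z"
  and vinf: "\<And>k. pw v k = z0 \<Longrightarrow> k = 0"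
  shows "Good x"
  unfolding Good_def
proof (intro ballI conjI)
  fix y assume y: "y \<in> C"
  have xc: "x \<in> C" using x Z2C by blast
  have vc: "v \<in> C" using v ZC by blast
  have dZ: "q x \<in> Z" "q x \<in> C" using Z2l[OF x xc] ZC by auto
  have gen: "s \<in> cyc (q x)" if sZ: "s \<in> Z" and s1: "s = pl (pw (pl x z0) n) (pw (q x) m)"
    and s2: "s = pl (pw (pl x v) n') (pw (q x) m')"
    and sn: "\<And>n. pw x n \<in> Z \<Longrightarrow> pw s n = z0" for s n m n' m'
  proof -
    have e1: "pw x (n * n) = z0" using E[OF x Zone sZ s1 sn] xc by simp
    have e2: "pw (pl x v) (n' * n') = z0" using E[OF x v sZ s2 sn] by simp
    define K where "K = n * n * (n' * n')"
    have "pw x K = z0" unfolding K_def using e1 xc by (simp add: G.int_pow_pow[symmetric])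
    moreover have "pw (pl x v) K = z0" unfolding K_def using e2 xc vc
      by (simp add: G.int_pow_pow[symmetric] mult.commute)
    ultimately have "pw v K = z0" using xc vc by (simp add: G.int_pow_distrib)
    then have "K = 0" using vinf by blast
    then have "n = 0 \<or> n' = 0" unfolding K_def by simp
    then have "s = pw (q x) m \<or> s = pw (q x) m'" using s1 s2 xc vc dZ by auto
    then show ?thesis using cyc_mem[OF dZ(2)] by blast
  qed
  obtain n m where 1: "st y x = pl (pw (pl x z0) n) (pw (q x) m)" using GD(1)[OF T x Zone y] by blast
  obtain n' m' where 2: "st y x = pl (pw (pl x v) n') (pw (q x) m')" using GD(1)[OF T x v y] by blast
  have 3: "pw (st y x) k = z0" if "pw x k \<in> Z" for k
    using st_rpow[OF y xc, of k] that y by simp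
  show "st y x \<in> cyc (q x)" using gen[OF Z2r[OF x y] 1 2 3] .
  obtain n m where 1: "st x y = pl (pw (pl x z0) n) (pw (q x) m)" using GD(2)[OF T x Zone y] by blast
  obtain n' m' where 2: "st x y = pl (pw (pl x v) n') (pw (q x) m')" using GD(2)[OF T x v y] by blast
  have 3: "pw (st x y) k = z0" if "pw x k \<in> Z" for k
    using st_lpow[OF x y, of k] that y by simp
  show "st x y \<in> cyc (q x)" using gen[OF Z2l[OF x y] 1 2 3] .
qed

lemma NT: assumes pr: "Factorial_Ring.prime (p::nat)" and N: "N \<noteq> 0 \<Longrightarrow> \<exists>k. N = p ^ k"
  and d: "int N dvd (int p * int p * j - int p)"
  shows "N dvd p"
proof -
  have p1: "p > 1" using pr prime_gt_1_nat by blast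
  have ne: "int p * int p * j - int p \<noteq> 0"
  proof
    assume "int p * int p * j - int p = 0"
    then have "int p * (int p * j - 1) = 0" by (simp add: algebra_simps)
    then have "int p * j = 1" using p1 by simp
    then have "int p dvd 1" by (metis dvd_triv_left)
    then show False using p1 by simp
  qed
  have "N \<noteq> 0" using d ne by auto
  then obtain k where k: "N = p ^ k" using N by blast
  show ?thesis
  proof (cases "k \<le> 1")
    case True
    then have "k = 0 \<or> k = 1" by auto
    then show ?thesis using k by auto
  next
    case False
    then have "k = (k - 2) + 2" by simp
    then have "p ^ k = p ^ (k - 2) * (p * p)" by (metis power_add power2_eq_square)
    then have ppN: "p * p dvd N" using k by simp
    have "int (p * p) dvd int N" using ppN by (simp only: int_dvd_int_iff)
    then have "int p * int p dvd int N" by simp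
    moreover have "int p * int p * j - int p = int p * (int p * j - 1)" by (simp add: algebra_simps)
    ultimately have "int p * int p dvd int p * (int p * j - 1)" using d dvd_trans by metis
    then have "int p dvd (int p * j - 1)" using p1 by simp
    then have False using p1 by (simp add: dvd_diff_right_iff)
    then show ?thesis using p1 by simp
  qed
qed

lemma pp: assumes pr: "Factorial_Ring.prime (p::nat)"
  and H3: "\<forall>z\<in>Z. G.ord z \<noteq> 0 \<longrightarrow> (\<exists>k. G.ord z = p ^ k)"
  and x: "x \<in> Z2" and g: "Good (pw x (int p))"
  shows "pw (q x) (int p) = z0"
proof -
  have xc: "x \<in> C" using x Z2C by blast
  define d where "d = q x"
  have dZ: "d \<in> Z" "d \<in> C" unfolding d_def using Z2l[OF x xc] ZC by auto
  have xp: "st x (pw x (int p)) = pw d (int p)" unfolding d_def using st_rpow[OF xc xc] .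
  have "q (pw x (int p)) = pw (st x (pw x (int p))) (int p)" using st_lpow[OF x] xc by simp
  also have "\<dots> = pw (pw d (int p)) (int p)" using xp by simp
  finally have qp: "q (pw x (int p)) = pw (pw d (int p)) (int p)" .
  have "st x (pw x (int p)) \<in> cyc (q (pw x (int p)))" using g xc unfolding Good_def by blast
  then have "pw d (int p) \<in> cyc (pw (pw d (int p)) (int p))" using xp qp by simp
  then obtain j where "pw d (int p) = pw (pw (pw d (int p)) (int p)) j" using cyc_mem dZ by auto
  then have "pw d (int p) = pw d (int p * int p * j)" using dZ by (simp add: G.int_pow_pow)
  then have "int (G.ord d) dvd (int p * int p * j - int p)" using G.int_pow_eq[OF dZ(2)] by blast
  then have "G.ord d dvd p" using NT[OF pr _] H3 dZ by blast
  then have "int (G.ord d) dvd int p" by simp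
  then show ?thesis using G.int_pow_eq_id[OF dZ(2)] unfolding d_def by blast
qed

lemma PW: assumes pr: "Factorial_Ring.prime (p::nat)"
  and x: "x \<in> Z2" and y: "y \<in> Z2" and gx: "Good x" and gy: "Good y"
  and px: "pw (q x) (int p) = z0" and py: "pw (q y) (int p) = z0"
  and nx: "q x \<noteq> z0" and ny: "q y \<noteq> z0"
  and k: "pw (q y) k = q y" and gz: "Good (pl x (pw y k))"
  and pz: "pw (q (pl x (pw y k))) (int p) = z0"
  shows "cyc (q x) = cyc (q y)"
proof -
  have xc: "x \<in> C" and yc: "y \<in> C" using x y Z2C by auto
  have qc: "q x \<in> C" "q y \<in> C" using xc yc by auto
  show ?thesis
  proof (cases "st x y \<noteq> z0")
    case True
    have "st x y \<in> cyc (q x)" "st x y \<in> cyc (q y)" using gx gy xc yc unfolding Good_def by auto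
    then show ?thesis using L1[OF pr _ qc(1) True px] L1[OF pr _ qc(2) True py] by simp
  next
    case F1: False
    show ?thesis
    proof (cases "st y x \<noteq> z0")
      case True
      have "st y x \<in> cyc (q x)" "st y x \<in> cyc (q y)" using gx gy xc yc unfolding Good_def by auto
      then show ?thesis using L1[OF pr _ qc(1) True px] L1[OF pr _ qc(2) True py] by simp
    next
      case F2: False
      define Y where "Y = pw y k"
      have Yc: "Y \<in> C" "Y \<in> Z2" unfolding Y_def using yc Z2pw[OF y] by auto
      define z where "z = pl x Y"
      have zc: "z \<in> C" unfolding z_def using xc Yc by simp
      have "st x z = pl (q x) (st x Y)" unfolding z_def using st_radd[OF xc xc Yc(1)] .
      also have "\<dots> = q x" unfolding Y_def using st_rpow[OF xc yc] F1 qc by simp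
      finally have sxz: "st x z = q x" .
      have "st y z = pl (st y x) (st y Y)" unfolding z_def using st_radd[OF yc xc Yc(1)] .
      also have "\<dots> = q y" unfolding Y_def using st_rpow[OF yc yc] F2 k qc yc by simp
      finally have syz: "st y z = q y" .
      have zcc: "q z \<in> C" using zc by simp
      have "q x \<in> cyc (q z)" "q y \<in> cyc (q z)" using gz xc yc sxz syz
        unfolding Good_def z_def Y_def by auto
      then show ?thesis using L1[OF pr _ zcc nx] L1[OF pr _ zcc ny] pz unfolding z_def Y_def by simp
    qed
  qed
qed

lemma BE: assumes x: "x \<in> Z2" and y: "y \<in> Z2"
  shows "q (pl x (pw y k)) = pl (pl (q x) (pw (pl (st x y) (st y x)) k)) (pw (q y) (k * k))"
proof -
  have xc: "x \<in> C" and yc: "y \<in> C" using x y Z2C by auto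
  define Y where "Y = pw y k"
  have Yc: "Y \<in> C" "Y \<in> Z2" unfolding Y_def using yc Z2pw[OF y] by auto
  have "q (pl x Y) = pl (st x (pl x Y)) (st Y (pl x Y))" using Z2_ladd[OF x Yc(2)] xc Yc by simp
  also have "\<dots> = pl (pl (q x) (st x Y)) (pl (st Y x) (st Y Y))" using st_radd xc Yc by simp
  also have "st x Y = pw (st x y) k" unfolding Y_def using st_rpow[OF xc yc] .
  also have "st Y x = pw (st y x) k" unfolding Y_def using st_lpow[OF y xc] .
  also have "st Y Y = pw (q y) (k * k)" unfolding Y_def
    using st_lpow[OF y Yc(1)] st_rpow[OF yc yc] yc by (simp add: Y_def G.int_pow_pow)
  finally show ?thesis unfolding Y_def using xc yc by (simp add: G.int_pow_distrib G.m_ac)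
qed

lemma S_Z2: "x \<in> S \<Longrightarrow> x \<in> Z2" unfolding S_def by blast

lemma S_pw: assumes pr: "Factorial_Ring.prime (p::nat)" and x: "x \<in> S" shows "pw x (int p) \<in> S"
proof -
  have xZ: "x \<in> Z2" and xs: "\<And>n. pw x n \<in> Z \<Longrightarrow> n = 0" using x unfolding S_def by auto
  have xc: "x \<in> C" using xZ Z2C by blast
  have p0: "int p \<noteq> 0" using pr prime_gt_1_nat by fastforce
  show ?thesis unfolding S_def
  proof (intro CollectI conjI allI impI)
    show "pw x (int p) \<in> Z2" using Z2pw[OF xZ] .
    fix n assume "pw (pw x (int p)) n \<in> Z"
    then have "pw x (int p * n) \<in> Z" using xc by (simp add: G.int_pow_pow)
    then have "int p * n = 0" using xs by blast
    then show "n = 0" using p0 by simp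
  qed
qed

lemma S_pair: assumes pr: "Factorial_Ring.prime (p::nat)" and x: "x \<in> S" and y: "y \<in> S"
  shows "pl x (pw y 1) \<in> S \<or> pl x (pw y (int p + 1)) \<in> S"
proof (rule ccontr)
  assume H: "\<not> (pl x (pw y 1) \<in> S \<or> pl x (pw y (int p + 1)) \<in> S)"
  have xZ: "x \<in> Z2" using x unfolding S_def by auto
  have yZ: "y \<in> Z2" and ys: "\<And>n. pw y n \<in> Z \<Longrightarrow> n = 0" using y unfolding S_def by auto
  have xc: "x \<in> C" and yc: "y \<in> C" using xZ yZ Z2C by auto
  have p0: "int p \<noteq> 0" using pr prime_gt_1_nat by fastforce
  have in1: "pl x (pw y 1) \<in> Z2" "pl x (pw y (int p + 1)) \<in> Z2" using Z2pl Z2pw xZ yZ by auto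
  obtain n1 where n1: "n1 \<noteq> 0" "pw (pl x y) n1 \<in> Z" using H in1 yc unfolding S_def by auto
  obtain n2 where n2: "n2 \<noteq> 0" "pw (pl x (pw y (int p + 1))) n2 \<in> Z" using H in1 unfolding S_def by auto
  define N where "N = n1 * n2"
  have A: "pw (pl x y) N \<in> Z" unfolding N_def using Zpw[OF n1(2), of n2] xc yc by (simp add: G.int_pow_pow)
  have B: "pw (pl x (pw y (int p + 1))) N \<in> Z" unfolding N_def
    using Zpw[OF n2(2), of n1] xc yc by (simp add: G.int_pow_pow mult.commute)
  have "pw (pl x (pw y (int p + 1))) N = pl (pw (pl x y) N) (pw y (int p * N))"
    using xc yc by (simp add: G.int_pow_distrib G.int_pow_pow G.int_pow_mult distrib_right G.m_ac)
  then have "pw y (int p * N) \<in> Z" using Zcanc[OF A] B yc by simp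
  then have "int p * N = 0" using ys by blast
  then show False using p0 n1 n2 unfolding N_def by simp
qed

lemma PW_S: assumes T: "T_brace A" and pr: "Factorial_Ring.prime (p::nat)"
  and H3: "\<forall>z\<in>Z. G.ord z \<noteq> 0 \<longrightarrow> (\<exists>k. G.ord z = p ^ k)"
  and x: "x \<in> S" and y: "y \<in> S" and nx: "q x \<noteq> z0" and ny: "q y \<noteq> z0"
  shows "cyc (q x) = cyc (q y)"
proof -
  have ppS: "pw (q u) (int p) = z0" if "u \<in> S" for u
    using pp[OF pr H3 S_Z2[OF that] Good_S[OF T S_pw[OF pr that]]] .
  have yc: "y \<in> C" using y S_Z2 Z2C by blast
  have qyc: "q y \<in> C" using yc by simp
  have k1: "pw (q y) 1 = q y" using qyc by simp
  have k2: "pw (q y) (int p + 1) = q y" using ppS[OF y] qyc by (simp add: G.int_pow_mult)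
  show ?thesis
  proof (cases "pl x (pw y 1) \<in> S")
    case True
    show ?thesis using PW[OF pr S_Z2[OF x] S_Z2[OF y] Good_S[OF T x] Good_S[OF T y] ppS[OF x] ppS[OF y] nx ny
      k1 Good_S[OF T True] ppS[OF True]] .
  next
    case False
    then have F: "pl x (pw y (int p + 1)) \<in> S" using S_pair[OF pr x y] by blast
    show ?thesis using PW[OF pr S_Z2[OF x] S_Z2[OF y] Good_S[OF T x] Good_S[OF T y] ppS[OF x] ppS[OF y] nx ny
      k2 Good_S[OF T F] ppS[OF F]] .
  qed
qed

lemma e_S: assumes a: "a \<in> Z2" and m: "m \<noteq> 0" "pw a m \<in> Z" and c: "c \<in> S" and k: "k \<noteq> 0"
  shows "pl a (pw c k) \<in> S"
proof -
  have cZ: "c \<in> Z2" and cs: "\<And>n. pw c n \<in> Z \<Longrightarrow> n = 0" using c unfolding S_def by auto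
  have ac: "a \<in> C" and cc: "c \<in> C" using a cZ Z2C by auto
  show ?thesis unfolding S_def
  proof (intro CollectI conjI allI impI)
    show "pl a (pw c k) \<in> Z2" using Z2pl[OF a Z2pw[OF cZ]] .
    fix n assume n: "pw (pl a (pw c k)) n \<in> Z"
    have 1: "pw (pl a (pw c k)) (n * m) \<in> Z" using Zpw[OF n, of m] ac cc by (simp add: G.int_pow_pow)
    have 2: "pw a (n * m) \<in> Z" using Zpw[OF m(2), of n] ac by (simp add: G.int_pow_pow mult.commute)
    have "pw (pl a (pw c k)) (n * m) = pl (pw a (n * m)) (pw c (k * (n * m)))"
      using ac cc by (simp add: G.int_pow_distrib G.int_pow_pow)
    then have "pw c (k * (n * m)) \<in> Z" using Zcanc[OF 2] 1 cc by simp
    then have "k * (n * m) = 0" using cs by blast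
    then show "n = 0" using k m by simp
  qed
qed

lemma ext: assumes T: "T_brace A" and pr: "Factorial_Ring.prime (p::nat)"
  and H3: "\<forall>z\<in>Z. G.ord z \<noteq> 0 \<longrightarrow> (\<exists>k. G.ord z = p ^ k)"
  and c: "c \<in> S" and a: "a \<in> Z2" and na: "q a \<noteq> z0"
  shows "\<exists>g\<in>S. q g \<noteq> z0 \<and> cyc (q a) = cyc (q g)"
proof (cases "a \<in> S")
  case True then show ?thesis using na by blast
next
  case False
  then obtain m where m: "m \<noteq> 0" "pw a m \<in> Z" using a unfolding S_def by blast
  have ac: "a \<in> C" and cZ: "c \<in> Z2" and cc: "c \<in> C" using a c S_Z2 Z2C by auto
  define e1 where "e1 = pl a (pw c 1)"
  define e2 where "e2 = pl a (pw c 2)"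
  have eS: "e1 \<in> S" "e2 \<in> S" unfolding e1_def e2_def using e_S[OF a m c] by auto
  define \<mu> where "\<mu> = pl (st a c) (st c a)"
  have mc: "\<mu> \<in> C" unfolding \<mu>_def using ac cc by simp
  have qc: "q a \<in> C" "q c \<in> C" using ac cc by auto
  have s1: "q e1 = pl (pl (q a) \<mu>) (q c)" unfolding e1_def \<mu>_def using BE[OF a cZ, of 1] ac cc by simp
  have s2: "q e2 = pl (pl (q a) (pw \<mu> 2)) (pw (q c) 4)" unfolding e2_def \<mu>_def using BE[OF a cZ, of 2] by simp
  have two: "pw u 2 = pl u u" if "u \<in> C" for u using G.int_pow_mult[OF that, of 1 1] that by simp
  have four: "pw (q c) 4 = pl (pw (q c) 2) (pw (q c) 2)" using G.int_pow_mult[OF qc(2), of 2 2] by simp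
  have "pl (q a) (q e2) = pl (pw (q e1) 2) (pw (q c) 2)"
    unfolding s1 s2 four using qc mc by (simp add: two G.m_ac)
  then have qa_eq: "q a = pl (pl (pw (q e1) 2) (pw (q c) 2)) (ng (q e2))"
    using qc eS S_Z2 Z2C by (metis G.inv_solve_right G.m_closed G.int_pow_closed st_closed G.m_comm)
  have "\<exists>g\<in>{c, e1, e2}. q g \<noteq> z0"
  proof (rule ccontr)
    assume "\<not> (\<exists>g\<in>{c, e1, e2}. q g \<noteq> z0)"
    then have "q c = z0" "q e1 = z0" "q e2 = z0" by auto
    then have "q a = z0" using qa_eq by simp
    then show False using na by simp
  qed
  then obtain g where g: "g \<in> {c, e1, e2}" "q g \<noteq> z0" by blast
  have gS: "g \<in> S" using g c eS by blast
  have gc: "q g \<in> C" using gS S_Z2 Z2C by simp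
  have mem: "q t \<in> cyc (q g)" if "t \<in> S" for t
  proof (cases "q t = z0")
    case True then show ?thesis using cyc_one[OF gc] by simp
  next
    case False
    have tc: "q t \<in> C" using that S_Z2 Z2C by simp
    show ?thesis using PW_S[OF T pr H3 that gS False g(2)] cyc_self[OF tc] by simp
  qed
  have H: "subgroup (cyc (q g)) G" using cyc_sub[OF gc] .
  have "q a \<in> cyc (q g)" unfolding qa_eq
    using mem[OF c] mem[OF eS(1)] mem[OF eS(2)] H
    by (meson G.subgroup_int_pow_closed subgroup.m_closed subgroup.m_inv_closed)
  then have "cyc (q a) = cyc (q g)"
    using L1[OF pr _ gc na] pp[OF pr H3 S_Z2[OF gS] Good_S[OF T S_pw[OF pr gS]]] by simp
  then show ?thesis using gS g(2) by blast
qed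

lemma main: assumes T: "T_brace A" and pr: "Factorial_Ring.prime (p::nat)"
  and H3: "\<forall>z\<in>Z. G.ord z \<noteq> 0 \<longrightarrow> (\<exists>k. G.ord z = p ^ k)"
  and c: "c \<in> Z2" "G.ord c = 0" and a: "a \<in> Z2" and b: "b \<in> Z2"
  and na: "q a \<noteq> z0" and nb: "q b \<noteq> z0"
  shows "cyc (q a) = cyc (q b)"
proof (cases "\<exists>n. n \<noteq> 0 \<and> pw c n \<in> Z")
  case True
  then obtain n where n: "n \<noteq> 0" "pw c n \<in> Z" by blast
  have cc: "c \<in> C" using c Z2C by blast
  have vinf: "k = 0" if "pw (pw c n) k = z0" for k
  proof -
    have "pw c (n * k) = z0" using that cc by (simp add: G.int_pow_pow)
    then have "int (G.ord c) dvd n * k" using G.int_pow_eq_id[OF cc] by blast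
    then show ?thesis using c(2) n(1) by simp
  qed
  have good: "Good x" if "x \<in> Z2" for x using Good_A[OF T that n(2) vinf] .
  have ppx: "pw (q x) (int p) = z0" if "x \<in> Z2" for x using pp[OF pr H3 that good[OF Z2pw[OF that]]] .
  have bc: "b \<in> C" using b Z2C by blast
  have k1: "pw (q b) 1 = q b" using bc by simp
  have z: "pl a (pw b 1) \<in> Z2" using Z2pl[OF a Z2pw[OF b]] .
  show ?thesis using PW[OF pr a b good[OF a] good[OF b] ppx[OF a] ppx[OF b] na nb k1 good[OF z] ppx[OF z]] .
next
  case False
  then have cS: "c \<in> S" using c unfolding S_def by blast
  obtain ga where ga: "ga \<in> S" "q ga \<noteq> z0" "cyc (q a) = cyc (q ga)" using ext[OF T pr H3 cS a na] by blast
  obtain gb where gb: "gb \<in> S" "q gb \<noteq> z0" "cyc (q b) = cyc (q gb)" using ext[OF T pr H3 cS b nb] by blast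
  show ?thesis using ga gb PW_S[OF T pr H3 ga(1) gb(1) ga(2) gb(2)] by simp
qed

end

theorem lemma4p7:
  fixes A :: "'a brace" and p :: nat and a b :: 'a
  assumes "T_brace A"
    and "Factorial_Ring.prime p"
    and "\<forall>x\<in>star_center A. add_ord A x \<noteq> 0 \<longrightarrow> (\<exists>k. add_ord A x = p ^ k)"
    and "\<exists>x\<in>star_center2 A. add_ord A x = 0"
    and "a \<in> star_center2 A" and "b \<in> star_center2 A"
    and "bstar A a a \<noteq> bzero A" and "bstar A b b \<noteq> bzero A"
  shows "add_cyclic A (bstar A a a) \<inter> add_cyclic A (bstar A b b) \<noteq> {bzero A}
       \<and> add_cyclic A (bstar A a a) = add_cyclic A (bstar A b b)"
proof -
  interpret brc A using assms(1) unfolding T_brace_def by unfold_locales blast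
  obtain c where c: "c \<in> star_center2 A" "add_ord A c = 0" using assms(4) by blast
  have a: "a \<in> Z2" and b: "b \<in> Z2" and cZ: "c \<in> Z2" using Z2_char assms(5,6) c(1) by auto
  have bz: "bzero A = z0" unfolding bzero_def by simp
  have eq: "cyc (q a) = cyc (q b)"
    using main[OF assms(1,2) _ cZ _ a b] assms(3,7,8) c(2) bz unfolding add_ord_def by simp
  have ac: "q a \<in> C" using a Z2C by simp
  have "q a \<in> cyc (q a) \<inter> cyc (q b)" using eq cyc_self[OF ac] by simp
  then have "cyc (q a) \<inter> cyc (q b) \<noteq> {z0}" using assms(7) bz by auto
  then show ?thesis using eq bz unfolding add_cyclic_def by simp
qed

end
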